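(* For any finite simple graph $G$, $$|\operatorname{nucleus}(G)|+|\operatorname{diadem}(G)|\le 2\alpha(G)\le |\operatorname{core}(G)|+|\operatorname{corona}(G)|.$$
   Context: For $X\subseteq V(G)$, $N(X)$ is the set of vertices adjacent to some vertex of $X$, and $d(X)=|X|-|N(X)|$. An independent set $S$ is critical if $d(S)=\max\{d(X):X\subseteq V(G)\}$; the empty set may be critical. A maximum critical independent set is a critical independent set of maximum cardinality. $\operatorname{nucleus}(G)$ and $\operatorname{diadem}(G)$ are, respectively, the intersection and the union of all maximum critical independent sets. $\alpha(G)$ is the independence number. $\operatorname{core}(G)$ and $\operatorname{corona}(G)$ are, respectively, the intersection and the union of all maximum independent sets of $G$. *)

theory Defs
  imports Main
begin

definition simple_graph :: "'a set \<Rightarrow> ('a \<Rightarrow> 'a \<Rightarrow> bool) \<Rightarrow> bool" where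
  "simple_graph V E \<longleftrightarrow> finite V \<and> (\<forall>u v. E u v \<longrightarrow> u \<in> V \<and> v \<in> V)
     \<and> (\<forall>u v. E u v \<longrightarrow> E v u) \<and> (\<forall>v. \<not> E v v)"

definition nbhd :: "'a set \<Rightarrow> ('a \<Rightarrow> 'a \<Rightarrow> bool) \<Rightarrow> 'a set \<Rightarrow> 'a set" where
  "nbhd V E X = {v \<in> V. \<exists>x\<in>X. E x v}"

definition dval :: "'a set \<Rightarrow> ('a \<Rightarrow> 'a \<Rightarrow> bool) \<Rightarrow> 'a set \<Rightarrow> int" where
  "dval V E X = int (card X) - int (card (nbhd V E X))"

definition indep :: "'a set \<Rightarrow> ('a \<Rightarrow> 'a \<Rightarrow> bool) \<Rightarrow> 'a set \<Rightarrow> bool" where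
  "indep V E S \<longleftrightarrow> S \<subseteq> V \<and> (\<forall>x\<in>S. \<forall>y\<in>S. \<not> E x y)"

definition max_d :: "'a set \<Rightarrow> ('a \<Rightarrow> 'a \<Rightarrow> bool) \<Rightarrow> int" where
  "max_d V E = Max (dval V E ` Pow V)"

definition critical_indep :: "'a set \<Rightarrow> ('a \<Rightarrow> 'a \<Rightarrow> bool) \<Rightarrow> 'a set \<Rightarrow> bool" where
  "critical_indep V E S \<longleftrightarrow> indep V E S \<and> dval V E S = max_d V E"

definition max_critical_indep :: "'a set \<Rightarrow> ('a \<Rightarrow> 'a \<Rightarrow> bool) \<Rightarrow> 'a set \<Rightarrow> bool" where
  "max_critical_indep V E S \<longleftrightarrow> critical_indep V E S
     \<and> (\<forall>T. critical_indep V E T \<longrightarrow> card T \<le> card S)"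

definition nucleus :: "'a set \<Rightarrow> ('a \<Rightarrow> 'a \<Rightarrow> bool) \<Rightarrow> 'a set" where
  "nucleus V E = \<Inter> {S. max_critical_indep V E S}"

definition diadem :: "'a set \<Rightarrow> ('a \<Rightarrow> 'a \<Rightarrow> bool) \<Rightarrow> 'a set" where
  "diadem V E = \<Union> {S. max_critical_indep V E S}"

definition alpha :: "'a set \<Rightarrow> ('a \<Rightarrow> 'a \<Rightarrow> bool) \<Rightarrow> nat" where
  "alpha V E = Max (card ` {S. indep V E S})"

definition max_indep :: "'a set \<Rightarrow> ('a \<Rightarrow> 'a \<Rightarrow> bool) \<Rightarrow> 'a set \<Rightarrow> bool" where
  "max_indep V E S \<longleftrightarrow> indep V E S \<and> card S = alpha V E"

definition core :: "'a set \<Rightarrow> ('a \<Rightarrow> 'a \<Rightarrow> bool) \<Rightarrow> 'a set" where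
  "core V E = \<Inter> {S. max_indep V E S}"

definition corona :: "'a set \<Rightarrow> ('a \<Rightarrow> 'a \<Rightarrow> bool) \<Rightarrow> 'a set" where
  "corona V E = \<Union> {S. max_indep V E S}"

end

theory Submission
  imports Defs
begin

lemma sg_fin: "simple_graph V E \<Longrightarrow> finite V"
  by (simp add: simple_graph_def)
lemma sg_in: "simple_graph V E \<Longrightarrow> E u v \<Longrightarrow> u \<in> V \<and> v \<in> V"
  by (simp add: simple_graph_def)
lemma sg_sym: "simple_graph V E \<Longrightarrow> E u v \<Longrightarrow> E v u"
  by (simp add: simple_graph_def)

lemma nbhd_sub: "nbhd V E X \<subseteq> V" by (auto simp: nbhd_def)

lemma indep_fin: "simple_graph V E \<Longrightarrow> indep V E S \<Longrightarrow> finite S"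
  by (meson finite_subset indep_def sg_fin)

lemma dval_le_max:
  assumes "simple_graph V E" "X \<subseteq> V"
  shows "dval V E X \<le> max_d V E"
proof -
  have "finite (dval V E ` Pow V)" using sg_fin[OF assms(1)] by simp
  thus ?thesis unfolding max_d_def using assms(2) by (simp add: Max_ge)
qed

lemma supermod:
  assumes "simple_graph V E" "A \<subseteq> V" "B \<subseteq> V"
  shows "dval V E (A \<union> B) + dval V E (A \<inter> B) \<ge> dval V E A + dval V E B"
proof -
  have fV: "finite V" using sg_fin[OF assms(1)] .
  have fA: "finite A" "finite B" using assms fV finite_subset by auto
  have c1: "card (A \<union> B) + card (A \<inter> B) = card A + card B"
    using card_Un_Int fA by metis
  have n1: "nbhd V E (A \<union> B) = nbhd V E A \<union> nbhd V E B" by (auto simp: nbhd_def)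
  have n2: "nbhd V E (A \<inter> B) \<subseteq> nbhd V E A \<inter> nbhd V E B" by (auto simp: nbhd_def)
  have fN: "finite (nbhd V E A)" "finite (nbhd V E B)"
    using fV nbhd_sub finite_subset by metis+
  have c2: "card (nbhd V E A \<union> nbhd V E B) + card (nbhd V E A \<inter> nbhd V E B)
      = card (nbhd V E A) + card (nbhd V E B)" using card_Un_Int fN by metis
  have c3: "card (nbhd V E (A \<inter> B)) \<le> card (nbhd V E A \<inter> nbhd V E B)"
    using n2 fN by (simp add: card_mono)
  show ?thesis unfolding dval_def n1 using c1 c2 c3 by linarith
qed

lemma Yset:
  assumes "simple_graph V E" "X \<subseteq> V"
  shows "indep V E (X - nbhd V E X) \<and> dval V E (X - nbhd V E X) \<ge> dval V E X"
proof -
  let ?Y = "X - nbhd V E X"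
  have fV: "finite V" using sg_fin[OF assms(1)] .
  have fX: "finite X" using assms fV finite_subset by auto
  have ind: "indep V E ?Y" unfolding indep_def nbhd_def using assms(2) sg_in[OF assms(1)] by blast
  have sub: "nbhd V E ?Y \<subseteq> nbhd V E X - X"
    unfolding nbhd_def using sg_sym[OF assms(1)] sg_in[OF assms(1)] by blast
  have fN: "finite (nbhd V E X)" using fV nbhd_sub finite_subset by metis
  have "card (nbhd V E X) = card (nbhd V E X \<inter> X) + card (nbhd V E X - X)"
  proof -
    have "nbhd V E X = (nbhd V E X \<inter> X) \<union> (nbhd V E X - X)" by blast
    moreover have "card ((nbhd V E X \<inter> X) \<union> (nbhd V E X - X)) = card (nbhd V E X \<inter> X) + card (nbhd V E X - X)"
      by (rule card_Un_disjoint) (use fN in auto)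
    ultimately show ?thesis by simp
  qed
  moreover have "card (nbhd V E ?Y) \<le> card (nbhd V E X - X)"
    using sub fN by (simp add: card_mono)
  moreover have "card ?Y = card X - card (X \<inter> nbhd V E X)"
    using fX by (simp add: card_Diff_subset_Int Diff_Int2 card_Diff_subset)
  moreover have "card (X \<inter> nbhd V E X) \<le> card X" using fX by (simp add: card_mono)
  ultimately show ?thesis using ind unfolding dval_def by (simp add: Int_commute)
qed


lemma ex_crit:
  assumes "simple_graph V E"
  shows "\<exists>S. critical_indep V E S"
proof -
  have fV: "finite V" using sg_fin[OF assms] .
  have "max_d V E \<in> dval V E ` Pow V" unfolding max_d_def using fV by (intro Max_in) auto
  then obtain X where X: "X \<subseteq> V" "dval V E X = max_d V E" by auto
  have "X - nbhd V E X \<subseteq> V" using X by auto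
  hence "dval V E (X - nbhd V E X) \<le> max_d V E" using dval_le_max[OF assms] by blast
  moreover have "indep V E (X - nbhd V E X)" "dval V E (X - nbhd V E X) \<ge> dval V E X"
    using Yset[OF assms X(1)] by auto
  ultimately have "critical_indep V E (X - nbhd V E X)" unfolding critical_indep_def using X(2) by linarith
  thus ?thesis by blast
qed

lemma ex_maxcrit:
  assumes "simple_graph V E"
  shows "\<exists>S. max_critical_indep V E S"
proof -
  let ?C = "{S. critical_indep V E S}"
  have fC: "finite ?C"
    by (rule finite_subset[of _ "Pow V"]) (auto simp: critical_indep_def indep_def sg_fin[OF assms])
  have ne: "?C \<noteq> {}" using ex_crit[OF assms] by auto
  have "Max (card ` ?C) \<in> card ` ?C" using fC ne by (intro Max_in) auto
  then obtain S where S: "S \<in> ?C" "card S = Max (card ` ?C)" by auto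
  have "\<forall>T. critical_indep V E T \<longrightarrow> card T \<le> card S"
    using S(2) fC by (auto intro: Max_ge)
  thus ?thesis using S unfolding max_critical_indep_def by auto
qed

lemma lemA:
  assumes G: "simple_graph V E" and S: "max_critical_indep V E S" and S': "max_critical_indep V E S'"
    and v: "v \<in> S'" "v \<notin> S"
  shows "\<exists>s\<in>S. E s v"
proof (rule ccontr)
  assume nv: "\<not> (\<exists>s\<in>S. E s v)"
  have SV: "S \<subseteq> V" "S' \<subseteq> V" using S S' unfolding max_critical_indep_def critical_indep_def indep_def by auto
  have dS: "dval V E S = max_d V E" "dval V E S' = max_d V E"
    using S S' unfolding max_critical_indep_def critical_indep_def by auto
  let ?X = "S \<union> S'"
  have "dval V E (S \<inter> S') \<le> max_d V E" by (rule dval_le_max[OF G]) (use SV in auto)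
  hence "dval V E ?X \<ge> max_d V E"
    using supermod[OF G SV] dS by linarith
  let ?Y = "?X - nbhd V E ?X"
  have XV: "?X \<subseteq> V" using SV by auto
  have Y: "indep V E ?Y" "dval V E ?Y \<ge> max_d V E"
    using Yset[OF G XV] \<open>dval V E ?X \<ge> max_d V E\<close> by auto
  have vY: "v \<in> ?Y"
    using v nv S' unfolding nbhd_def max_critical_indep_def critical_indep_def indep_def by auto
  have YV: "?Y \<subseteq> V" using XV by auto
  have indS: "indep V E S" using S unfolding max_critical_indep_def critical_indep_def by auto
  have nYX: "\<And>x y. x \<in> ?Y \<Longrightarrow> y \<in> ?X \<Longrightarrow> \<not> E y x"
  proof
    fix x y assume "x \<in> ?Y" "y \<in> ?X" "E y x"
    have "x \<in> V" using sg_in[OF G \<open>E y x\<close>] by simp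
    have "x \<in> nbhd V E ?X" unfolding nbhd_def
      using \<open>x \<in> V\<close> \<open>y \<in> ?X\<close> \<open>E y x\<close> by blast
    thus False using \<open>x \<in> ?Y\<close> by blast
  qed
  have indU: "indep V E (?Y \<union> S)"
    unfolding indep_def
  proof (intro conjI ballI)
    show "?Y \<union> S \<subseteq> V" using YV SV by blast
  next
    fix x y assume x: "x \<in> ?Y \<union> S" and y: "y \<in> ?Y \<union> S"
    show "\<not> E x y"
    proof (cases "x \<in> ?Y")
      case True
      have "y \<in> ?X" using y by blast
      hence "\<not> E y x" using nYX[OF True] by blast
      thus ?thesis using sg_sym[OF G, of x y] by blast
    next
      case False
      hence xS: "x \<in> S" using x by blast
      show ?thesis
      proof (cases "y \<in> ?Y")
        case True
        have "\<not> E x y" using nYX[OF True, of x] xS by blast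
        thus ?thesis .
      next
        case False
        hence "y \<in> S" using y by blast
        thus ?thesis using xS indS unfolding indep_def by blast
      qed
    qed
  qed
  have "dval V E (?Y \<inter> S) \<le> max_d V E" by (rule dval_le_max[OF G]) (use YV in blast)
  hence "dval V E (?Y \<union> S) \<ge> max_d V E"
    using supermod[OF G YV SV(1)] Y(2) dS by linarith
  moreover have "dval V E (?Y \<union> S) \<le> max_d V E" by (rule dval_le_max[OF G]) (use YV SV in blast)
  ultimately have "critical_indep V E (?Y \<union> S)" using indU unfolding critical_indep_def by auto
  hence le: "card (?Y \<union> S) \<le> card S" using S unfolding max_critical_indep_def by auto
  have fin: "finite (?Y \<union> S)" using indU indep_fin[OF G] by blast
  have ps: "S \<subset> ?Y \<union> S" using vY v by blast
  have "card S < card (?Y \<union> S)" using psubset_card_mono[OF fin ps] .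
  thus False using le by linarith
qed

lemma part1:
  assumes G: "simple_graph V E"
  shows "card (nucleus V E) + card (diadem V E) \<le> 2 * alpha V E"
proof -
  have fV: "finite V" using sg_fin[OF G] .
  obtain S where S: "max_critical_indep V E S" using ex_maxcrit[OF G] by blast
  have SV: "S \<subseteq> V" and Sind: "indep V E S" and dS: "dval V E S = max_d V E"
    using S unfolding max_critical_indep_def critical_indep_def indep_def by auto
  let ?U = "diadem V E" and ?I = "nucleus V E"
  have UV: "?U \<subseteq> V" unfolding diadem_def max_critical_indep_def critical_indep_def indep_def by auto
  have IS: "?I \<subseteq> S" unfolding nucleus_def using S by auto
  have SU: "S \<subseteq> ?U" unfolding diadem_def using S by auto
  have fU: "finite ?U" using UV fV finite_subset by auto
  have fS: "finite S" using SV fV finite_subset by auto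
  let ?A = "?U - S"
  have AN: "?A \<subseteq> nbhd V E S"
  proof
    fix v assume "v \<in> ?A"
    then obtain S' where S': "max_critical_indep V E S'" "v \<in> S'" "v \<notin> S" unfolding diadem_def by auto
    have "v \<in> V" using S' unfolding max_critical_indep_def critical_indep_def indep_def by auto
    thus "v \<in> nbhd V E S" using lemA[OF G S S'] unfolding nbhd_def by auto
  qed
  let ?S2 = "S - nbhd V E ?A"
  have N2: "nbhd V E ?S2 \<subseteq> nbhd V E S - ?A"
    unfolding nbhd_def using sg_sym[OF G] sg_in[OF G] by blast
  have fN: "finite (nbhd V E S)" using fV nbhd_sub finite_subset by metis
  have fA: "finite ?A" using fU by auto
  have c1: "card (nbhd V E ?S2) \<le> card (nbhd V E S) - card ?A"
    using card_mono[OF _ N2] fN card_Diff_subset[OF fA AN] by auto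
  have cA: "card ?A \<le> card (nbhd V E S)" using card_mono[OF fN AN] .
  have c2: "card ?S2 = card S - card (S \<inter> nbhd V E ?A)"
    using fS by (simp add: card_Diff_subset_Int)
  have c3: "card (S \<inter> nbhd V E ?A) \<le> card S" using fS by (simp add: card_mono)
  have "dval V E ?S2 \<le> max_d V E" by (rule dval_le_max[OF G]) (use SV in auto)
  hence "card ?A \<le> card (S \<inter> nbhd V E ?A)"
    using dS c1 c2 c3 cA unfolding dval_def by linarith
  moreover have "S \<inter> nbhd V E ?A \<subseteq> S - ?I"
  proof
    fix s assume s: "s \<in> S \<inter> nbhd V E ?A"
    then obtain a where a: "a \<in> ?A" "E a s" unfolding nbhd_def by auto
    then obtain S' where S': "max_critical_indep V E S'" "a \<in> S'" unfolding diadem_def by auto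
    have "s \<notin> ?I"
    proof
      assume "s \<in> ?I"
      hence "s \<in> S'" unfolding nucleus_def using S' by auto
      thus False using S' a unfolding max_critical_indep_def critical_indep_def indep_def by auto
    qed
    thus "s \<in> S - ?I" using s by auto
  qed
  hence "card (S \<inter> nbhd V E ?A) \<le> card (S - ?I)" using fS by (simp add: card_mono)
  moreover have "card (S - ?I) = card S - card ?I" using card_Diff_subset IS fS finite_subset by metis
  moreover have "card ?U = card ?A + card S" using card_Diff_subset[OF fS SU] card_mono[OF fU SU] by auto
  moreover have "card ?I \<le> card S" using card_mono[OF fS IS] .
  moreover have "card S \<le> alpha V E"
  proof -
    have "finite {S. indep V E S}"
      by (rule finite_subset[of _ "Pow V"]) (auto simp: indep_def fV)
    hence "finite (card ` {S. indep V E S})" by (rule finite_imageI)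
    thus ?thesis unfolding alpha_def using Sind by (auto intro: Max_ge)
  qed
  ultimately show ?thesis by linarith
qed

lemma part2:
  assumes G: "simple_graph V E"
  shows "2 * alpha V E \<le> card (core V E) + card (corona V E)"
proof -
  have fV: "finite V" using sg_fin[OF G] .
  let ?M = "{S. max_indep V E S}"
  have fI: "finite {S. indep V E S}"
    by (rule finite_subset[of _ "Pow V"]) (auto simp: indep_def fV)
  have "alpha V E \<in> card ` {S. indep V E S}" unfolding alpha_def
  proof (rule Max_in)
    show "finite (card ` {S. indep V E S})" using fI by (rule finite_imageI)
    have "indep V E {}" by (simp add: indep_def)
    thus "card ` {S. indep V E S} \<noteq> {}" by blast
  qed
  hence ne: "?M \<noteq> {}" unfolding max_indep_def by auto
  have fM: "finite ?M" by (rule finite_subset[OF _ fI]) (auto simp: max_indep_def)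
  have aI: "\<And>T. indep V E T \<Longrightarrow> card T \<le> alpha V E"
    unfolding alpha_def using fI by (auto intro: Max_ge)
  have key: "\<And>F. finite F \<Longrightarrow> F \<noteq> {} \<Longrightarrow> F \<subseteq> ?M \<Longrightarrow> 2 * alpha V E \<le> card (\<Inter>F) + card (\<Union>F)"
  proof -
    fix F :: "'a set set"
    assume "finite F" "F \<noteq> {}" "F \<subseteq> ?M"
    thus "2 * alpha V E \<le> card (\<Inter>F) + card (\<Union>F)"
    proof (induction F rule: finite_ne_induct)
      case (singleton S)
      thus ?case unfolding max_indep_def by auto
    next
      case (insert S F)
      let ?I = "\<Inter>F" and ?U = "\<Union>F"
      have SM: "max_indep V E S" using insert.prems by auto
      have FM: "F \<subseteq> ?M" using insert.prems by auto
      have IH: "2 * alpha V E \<le> card ?I + card ?U" using insert.IH FM by auto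
      have UV: "?U \<subseteq> V" using FM unfolding max_indep_def indep_def by auto
      have fU: "finite ?U" using UV fV finite_subset by auto
      obtain S0 where S0: "S0 \<in> F" using insert.hyps by auto
      have IU: "?I \<subseteq> ?U" using S0 by auto
      have fIs: "finite ?I" using IU fU finite_subset by auto
      have SV: "S \<subseteq> V" and cS: "card S = alpha V E" using SM unfolding max_indep_def indep_def by auto
      have fS: "finite S" using SV fV finite_subset by auto
      let ?T = "(S \<inter> ?U) \<union> (?I - S)"
      have "indep V E ?T"
        unfolding indep_def
      proof (intro conjI ballI)
        show "?T \<subseteq> V" using SV UV IU by auto
      next
        fix x y assume x: "x \<in> ?T" and y: "y \<in> ?T"
        have indS: "\<forall>x\<in>S. \<forall>y\<in>S. \<not> E x y" using SM unfolding max_indep_def indep_def by auto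
        have indF: "\<And>B. B \<in> F \<Longrightarrow> \<forall>x\<in>B. \<forall>y\<in>B. \<not> E x y" using FM unfolding max_indep_def indep_def by auto
        show "\<not> E x y"
        proof (cases "x \<in> S")
          case True
          show ?thesis
          proof (cases "y \<in> S")
            case True thus ?thesis using \<open>x \<in> S\<close> indS by auto
          next
            case False
            then have yI: "y \<in> ?I" using y by auto
            obtain B where "B \<in> F" "x \<in> B" using x True by auto
            thus ?thesis using yI indF by blast
          qed
        next
          case False
          then have xI: "x \<in> ?I" using x by auto
          show ?thesis
          proof (cases "y \<in> S")
            case True
            obtain B where "B \<in> F" "y \<in> B" using y True by auto
            thus ?thesis using xI indF by blast
          next
            case False
            then have yI: "y \<in> ?I" using y by auto
            thus ?thesis using xI indF S0 by blast
          qed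
        qed
      qed
      hence cT: "card ?T \<le> alpha V E" using aI by blast
      have "card ?T = card (S \<inter> ?U) + card (?I - S)"
        by (rule card_Un_disjoint) (use fS fIs in auto)
      moreover have "card (?U \<union> S) + card (?U \<inter> S) = card ?U + card S" using card_Un_Int fU fS by metis
      moreover have "card (?I \<inter> S) + card (?I - S) = card ?I"
        using card_Un_disjoint[of "?I \<inter> S" "?I - S"] fIs by (metis Int_Diff_Un Int_Diff_disjoint finite_Diff finite_Int)
      moreover have "card (S \<inter> ?U) = card (?U \<inter> S)" by (simp add: Int_commute)
      ultimately have "card ?I + card ?U \<le> card (?I \<inter> S) + card (?U \<union> S)" using cT cS by linarith
      moreover have "\<Inter>(insert S F) = ?I \<inter> S" "\<Union>(insert S F) = ?U \<union> S" by auto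
      ultimately show ?case using IH by simp
    qed
  qed
  show ?thesis using key[OF fM ne] unfolding core_def corona_def by auto
qed

theorem corollary4p1:
  fixes V :: "'a set" and E :: "'a \<Rightarrow> 'a \<Rightarrow> bool"
  assumes "simple_graph V E"
  shows "card (nucleus V E) + card (diadem V E) \<le> 2 * alpha V E
       \<and> 2 * alpha V E \<le> card (core V E) + card (corona V E)"
  using part1[OF assms] part2[OF assms] by simp

end
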